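(* Assume the standing hypotheses (H). If $A$ is a part of $G$ with $|A|\ge 3$ and $\{u,v\}\subseteq A$ is a pair of distinct vertices maximizing $|L(u)\cap L(v)|$ over all such pairs in $A$, then $\{u,v\}$ is a good pair for $A$.
   Context: A list assignment $L$ assigns to each vertex $v$ a set $L(v)$ of colors; an $L$-coloring is a proper coloring $f$ with $f(v)\in L(v)$ for all $v$; $\mathrm{ch}$ denotes choice number and $\chi$ chromatic number. A part of a complete multipartite graph is one of its maximal stable sets. Standing hypotheses (H): $k\ge1$ and $n\ge 2k+2$ are integers; $G$ is a complete $k$-partite graph (exactly $k$ nonempty parts) on $n$ vertices; $L$ is a list assignment for $G$ with $|L(v)|\ge\lceil (n+k-1)/3\rceil$ for every vertex $v$; $G$ has no $L$-coloring; $\left|\bigcup_{v\in V(G)}L(v)\right|\le n-1$; and every graph $H$ with fewer than $n$ vertices satisfies $\mathrm{ch}(H)\le\max\{\chi(H),\lceil(|V(H)|+\chi(H)-1)/3\rceil\}$. For $i\in\{1,2,3,4\}$, $k_i$ denotes the number of parts of $G$ of size $i$. For a part $A$ with $|A|\ge3$, a pair $\{u,v\}\subseteq A$ of distinct vertices is a good pair for $A$ if either $|A|=3$ and $|L(u)\cap L(v)|\ge\frac{k_1+k_4+1}{3}$, or $|A|=4$ and $|L(u)\cap L(v)|\ge|L(w)\cap L(z)|$ where $\{w,z\}=A\setminus\{u,v\}$. *)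

theory Defs
  imports Complex_Main
begin

text \<open>Graphs are given by a finite vertex set V and an edge predicate E (only pairs in V matter).\<close>

definition simple_graph :: "'a set \<Rightarrow> ('a \<Rightarrow> 'a \<Rightarrow> bool) \<Rightarrow> bool" where
  "simple_graph V E \<longleftrightarrow> finite V \<and> (\<forall>x\<in>V. \<not> E x x) \<and> (\<forall>x\<in>V. \<forall>y\<in>V. E x y \<longrightarrow> E y x)"

definition stable_set :: "'a set \<Rightarrow> ('a \<Rightarrow> 'a \<Rightarrow> bool) \<Rightarrow> 'a set \<Rightarrow> bool" where
  "stable_set V E S \<longleftrightarrow> S \<subseteq> V \<and> (\<forall>x\<in>S. \<forall>y\<in>S. \<not> E x y)"

definition is_part :: "'a set \<Rightarrow> ('a \<Rightarrow> 'a \<Rightarrow> bool) \<Rightarrow> 'a set \<Rightarrow> bool" where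
  "is_part V E A \<longleftrightarrow> stable_set V E A \<and> (\<forall>S. stable_set V E S \<and> A \<subseteq> S \<longrightarrow> S = A)"

definition complete_multipartite :: "'a set \<Rightarrow> ('a \<Rightarrow> 'a \<Rightarrow> bool) \<Rightarrow> nat \<Rightarrow> bool" where
  "complete_multipartite V E k \<longleftrightarrow> finite V \<and>
     (\<exists>P. finite P \<and> card P = k \<and> \<Union>P = V \<and> (\<forall>B\<in>P. B \<noteq> {}) \<and>
          (\<forall>B\<in>P. \<forall>C\<in>P. B \<noteq> C \<longrightarrow> B \<inter> C = {}) \<and>
          (\<forall>x\<in>V. \<forall>y\<in>V. E x y \<longleftrightarrow> \<not> (\<exists>B\<in>P. x \<in> B \<and> y \<in> B)))"

definition proper_coloring :: "'a set \<Rightarrow> ('a \<Rightarrow> 'a \<Rightarrow> bool) \<Rightarrow> ('a \<Rightarrow> 'c) \<Rightarrow> bool" where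
  "proper_coloring V E f \<longleftrightarrow> (\<forall>x\<in>V. \<forall>y\<in>V. E x y \<longrightarrow> f x \<noteq> f y)"

definition L_coloring :: "'a set \<Rightarrow> ('a \<Rightarrow> 'a \<Rightarrow> bool) \<Rightarrow> ('a \<Rightarrow> 'c set) \<Rightarrow> ('a \<Rightarrow> 'c) \<Rightarrow> bool" where
  "L_coloring V E L f \<longleftrightarrow> proper_coloring V E f \<and> (\<forall>v\<in>V. f v \<in> L v)"

text \<open>k-choosability (colours drawn from the infinite type nat; lists are finite sets).\<close>
definition choosable :: "'a set \<Rightarrow> ('a \<Rightarrow> 'a \<Rightarrow> bool) \<Rightarrow> nat \<Rightarrow> bool" where
  "choosable V E k \<longleftrightarrow> (\<forall>L :: 'a \<Rightarrow> nat set. (\<forall>v\<in>V. finite (L v) \<and> card (L v) \<ge> k) \<longrightarrow>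
                          (\<exists>f. L_coloring V E L f))"

definition choice_number :: "'a set \<Rightarrow> ('a \<Rightarrow> 'a \<Rightarrow> bool) \<Rightarrow> nat" where
  "choice_number V E = (LEAST k. choosable V E k)"

definition chromatic_number :: "'a set \<Rightarrow> ('a \<Rightarrow> 'a \<Rightarrow> bool) \<Rightarrow> nat" where
  "chromatic_number V E = (LEAST k. \<exists>f :: 'a \<Rightarrow> nat. proper_coloring V E f \<and> f ` V \<subseteq> {..<k})"

definition num_parts_of_size :: "'a set \<Rightarrow> ('a \<Rightarrow> 'a \<Rightarrow> bool) \<Rightarrow> nat \<Rightarrow> nat" where
  "num_parts_of_size V E i = card {A. is_part V E A \<and> card A = i}"

definition good_pair :: "'a set \<Rightarrow> ('a \<Rightarrow> 'a \<Rightarrow> bool) \<Rightarrow> ('a \<Rightarrow> 'c set) \<Rightarrow> 'a set \<Rightarrow> 'a \<Rightarrow> 'a \<Rightarrow> bool" where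
  "good_pair V E L A u v \<longleftrightarrow> u \<in> A \<and> v \<in> A \<and> u \<noteq> v \<and>
     ((card A = 3 \<and> real (card (L u \<inter> L v)) \<ge>
         (real (num_parts_of_size V E 1) + real (num_parts_of_size V E 4) + 1) / 3)
    \<or> (card A = 4 \<and> (\<forall>w z. A - {u, v} = {w, z} \<longrightarrow> card (L u \<inter> L v) \<ge> card (L w \<inter> L z))))"

end

theory Submission
  imports Defs
begin


lemma greedy_inj:
  fixes W :: "'a set"
  assumes "finite W"
  shows "\<forall>L :: 'a \<Rightarrow> 'b set. (\<forall>v\<in>W. finite (L v) \<and> card (L v) \<ge> card W) \<longrightarrow>
           (\<exists>f. (\<forall>v\<in>W. f v \<in> L v) \<and> inj_on f W)"
  using assms
proof (induction W rule: finite_induct)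
  case empty then show ?case by auto
next
  case (insert x W)
  show ?case
  proof (intro allI impI)
    fix L :: "'a \<Rightarrow> 'b set"
    assume H: "\<forall>v\<in>insert x W. finite (L v) \<and> card (L v) \<ge> card (insert x W)"
    have cW: "card (insert x W) = Suc (card W)" using insert by simp
    from H cW have "\<forall>v\<in>W. finite (L v) \<and> card (L v) \<ge> card W" by auto
    with insert.IH obtain f where f: "\<forall>v\<in>W. f v \<in> L v" "inj_on f W" by blast
    have c1: "card (f ` W) \<le> card W" by (rule card_image_le[OF insert.hyps(1)])
    have c2: "card (L x) \<ge> Suc (card W)" using H cW by auto
    have "\<not> L x \<subseteq> f ` W"
    proof
      assume "L x \<subseteq> f ` W"
      then have "card (L x) \<le> card (f ` W)" using card_mono[OF finite_imageI[OF insert.hyps(1)]] by blast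
      with c1 c2 show False by linarith
    qed
    then obtain c where c: "c \<in> L x" "c \<notin> f ` W" by blast
    have "\<forall>v\<in>insert x W. (f(x := c)) v \<in> L v" using f c insert.hyps(2) by auto
    moreover have "inj_on (f(x := c)) (insert x W)"
      using f(2) c insert.hyps(2) by (auto simp: inj_on_def)
    ultimately show "\<exists>f. (\<forall>v\<in>insert x W. f v \<in> L v) \<and> inj_on f (insert x W)" by blast
  qed
qed

lemma choosable_card:
  assumes "finite W" "\<forall>x\<in>W. \<not> F x x"
  shows "choosable W F (card W)"
  unfolding choosable_def L_coloring_def proper_coloring_def
proof (intro allI impI)
  fix L :: "'a \<Rightarrow> nat set"
  assume "\<forall>v\<in>W. finite (L v) \<and> card W \<le> card (L v)"
  with greedy_inj[OF assms(1)] obtain f where f: "\<forall>v\<in>W. f v \<in> L v" "inj_on f W" by blast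
  have "\<forall>x\<in>W. \<forall>y\<in>W. F x y \<longrightarrow> f x \<noteq> f y"
    using f(2) assms(2) unfolding inj_on_def by blast
  with f(1) show "\<exists>f. (\<forall>x\<in>W. \<forall>y\<in>W. F x y \<longrightarrow> f x \<noteq> f y) \<and> (\<forall>v\<in>W. f v \<in> L v)" by blast
qed

lemma choosable_mono:
  assumes "choosable W F a" "a \<le> b" shows "choosable W F b"
  unfolding choosable_def
proof (intro allI impI)
  fix L :: "'a \<Rightarrow> nat set"
  assume "\<forall>v\<in>W. finite (L v) \<and> b \<le> card (L v)"
  then have "\<forall>v\<in>W. finite (L v) \<and> a \<le> card (L v)" using assms(2) by auto
  then show "\<exists>f. L_coloring W F L f" using assms(1) unfolding choosable_def by blast
qed

lemma choosable_of_le: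
  assumes "finite W" "\<forall>x\<in>W. \<not> F x x" "choice_number W F \<le> b"
  shows "choosable W F b"
proof -
  have "choosable W F (choice_number W F)"
    unfolding choice_number_def by (rule LeastI[of "choosable W F" "card W"]) (rule choosable_card[of W F, OF assms(1) assms(2)])
  then show ?thesis using choosable_mono assms(3) by blast
qed

lemma transfer_coloring:
  fixes h :: "'a \<Rightarrow> nat" and L :: "'a \<Rightarrow> 'c set"
  assumes fin: "finite V'" and inj: "inj_on h V'"
    and ch: "choosable (h ` V') (\<lambda>i j. \<exists>x\<in>V'. \<exists>y\<in>V'. h x = i \<and> h y = j \<and> E x y) b"
    and lists: "\<forall>x\<in>V'. finite (L x) \<and> card (L x) \<ge> b"
  shows "\<exists>f. L_coloring V' E L f"
proof -
  let ?F = "\<lambda>i j. \<exists>x\<in>V'. \<exists>y\<in>V'. h x = i \<and> h y = j \<and> E x y"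
  let ?U = "\<Union>x\<in>V'. L x"
  have finU: "finite ?U" using fin lists by auto
  obtain \<phi> :: "'c \<Rightarrow> nat" and N where \<phi>: "\<phi> ` ?U = {i. i < N}" "inj_on \<phi> ?U"
    using finite_imp_inj_to_nat_seg[OF finU] by blast
  define L' where "L' i = \<phi> ` L (inv_into V' h i)" for i
  have L'h: "L' (h x) = \<phi> ` L x" if "x \<in> V'" for x using inv_into_f_f[OF inj that] L'_def by simp
  have "\<forall>i\<in>h ` V'. finite (L' i) \<and> card (L' i) \<ge> b"
  proof
    fix i assume "i \<in> h ` V'" then obtain x where x: "x\<in>V'" "i = h x" by blast
    have "inj_on \<phi> (L x)" using \<phi>(2) by (rule inj_on_subset) (use x(1) in auto)
    then have "card (L' i) = card (L x)" using L'h x by (simp add: card_image)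
    then show "finite (L' i) \<and> card (L' i) \<ge> b" using lists x L'h by auto
  qed
  with ch obtain f' where f': "L_coloring (h ` V') ?F L' f'" unfolding choosable_def by blast
  define f where "f x = inv_into ?U \<phi> (f' (h x))" for x
  have inimg: "f' (h x) \<in> \<phi> ` L x" if "x \<in> V'" for x
    using f' that L'h unfolding L_coloring_def by force
  show ?thesis
  proof (rule exI[of _ f], unfold L_coloring_def proper_coloring_def, intro conjI ballI impI)
    fix x assume x: "x \<in> V'"
    obtain c where c: "c \<in> L x" "f' (h x) = \<phi> c" using inimg[OF x] by blast
    have "c \<in> ?U" using c x by blast
    then show "f x \<in> L x" using c f_def inv_into_f_f[OF \<phi>(2)] by simp
  next
    fix x y assume x: "x \<in> V'" and y: "y\<in>V'" and e: "E x y"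
    have "?F (h x) (h y)" using x y e by blast
    then have ne: "f' (h x) \<noteq> f' (h y)" using f' x y unfolding L_coloring_def proper_coloring_def by blast
    have "f' (h x) \<in> \<phi> ` ?U" using inimg[OF x] x by blast
    moreover have "f' (h y) \<in> \<phi> ` ?U" using inimg[OF y] y by blast
    ultimately have "\<phi> (f x) = f' (h x)" "\<phi> (f y) = f' (h y)" unfolding f_def by (auto intro: f_inv_into_f)
    then show "f x \<noteq> f y" using ne by auto
  qed
qed

lemma double_count:
  assumes "finite X" "finite U" "\<forall>v\<in>X. L v \<subseteq> U"
  shows "(\<Sum>v\<in>X. card (L v)) = (\<Sum>c\<in>U. card {v\<in>X. c \<in> L v})"
proof -
  have "(\<Sum>v\<in>X. card (L v)) = (\<Sum>v\<in>X. \<Sum>c\<in>U. if c \<in> L v then 1 else 0)"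
  proof (rule sum.cong[OF refl])
    fix v assume v: "v \<in> X"
    have "L v = {c\<in>U. c \<in> L v}" using assms(3) v by auto
    then have "card (L v) = (\<Sum>c\<in>{c\<in>U. c \<in> L v}. 1)" by simp
    also have "\<dots> = (\<Sum>c\<in>U. if c \<in> L v then 1 else 0)" by (rule sum.inter_filter[OF assms(2)])
    finally show "card (L v) = (\<Sum>c\<in>U. if c \<in> L v then 1 else 0)" .
  qed
  also have "\<dots> = (\<Sum>c\<in>U. \<Sum>v\<in>X. if c \<in> L v then 1 else 0)" by (rule sum.swap)
  also have "\<dots> = (\<Sum>c\<in>U. card {v\<in>X. c \<in> L v})"
  proof (rule sum.cong[OF refl])
    fix c
    have "(\<Sum>v\<in>{v\<in>X. c \<in> L v}. 1::nat) = (\<Sum>v\<in>X. if c \<in> L v then 1 else 0)"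
      by (rule sum.inter_filter[OF assms(1)])
    then show "(\<Sum>v\<in>X. if c \<in> L v then 1 else 0) = card {v\<in>X. c \<in> L v}" by simp
  qed
  finally show ?thesis .
qed

lemma three_sets:
  assumes "finite X" "finite Y" "finite Z"
  shows "card X + card Y + card Z \<le> card (X \<union> Y \<union> Z) + card (X \<inter> Y) + card (X \<inter> Z) + card (Y \<inter> Z)"
proof -
  have 1: "card X + card Y = card (X \<union> Y) + card (X \<inter> Y)" by (rule card_Un_Int[OF assms(1) assms(2)])
  have 2: "card (X \<union> Y) + card Z = card (X \<union> Y \<union> Z) + card ((X \<union> Y) \<inter> Z)" by (rule card_Un_Int) (use assms in auto)
  have "(X \<union> Y) \<inter> Z = (X \<inter> Z) \<union> (Y \<inter> Z)" by blast
  then have 3: "card ((X \<union> Y) \<inter> Z) \<le> card (X \<inter> Z) + card (Y \<inter> Z)" by (simp add: card_Un_le)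
  from 1 2 3 show ?thesis by linarith
qed



theorem corollary22:
  fixes V :: "'a set" and E :: "'a \<Rightarrow> 'a \<Rightarrow> bool" and L :: "'a \<Rightarrow> 'c set"
    and k n :: nat and A :: "'a set" and u v :: 'a
  assumes k: "k \<ge> 1" and n: "n \<ge> 2 * k + 2"
    and G: "complete_multipartite V E k" and cardV: "card V = n"
    and lists: "\<forall>x\<in>V. card (L x) \<ge> nat \<lceil>real (n + k - 1) / 3\<rceil>"
    and noncol: "\<not> (\<exists>f. L_coloring V E L f)"
    and colors: "card (\<Union>x\<in>V. L x) \<le> n - 1"
    and minimal: "\<forall>(W :: nat set) F. simple_graph W F \<and> card W < n \<longrightarrow>
         int (choice_number W F) \<le> max (int (chromatic_number W F))
            \<lceil>(real (card W) + real (chromatic_number W F) - 1) / 3\<rceil>"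
    and A: "is_part V E A" and A3: "card A \<ge> 3"
    and uv: "u \<in> A" "v \<in> A" "u \<noteq> v"
    and maxpair: "\<forall>x\<in>A. \<forall>y\<in>A. x \<noteq> y \<longrightarrow> card (L x \<inter> L y) \<le> card (L u \<inter> L v)"
  shows "good_pair V E L A u v"
proof -
  have G': "finite V \<and> (\<exists>P. finite P \<and> card P = k \<and> \<Union>P = V \<and> (\<forall>B\<in>P. B \<noteq> {}) \<and>
          (\<forall>B\<in>P. \<forall>C\<in>P. B \<noteq> C \<longrightarrow> B \<inter> C = {}) \<and>
          (\<forall>x\<in>V. \<forall>y\<in>V. E x y \<longleftrightarrow> \<not> (\<exists>B\<in>P. x \<in> B \<and> y \<in> B)))"
    using G unfolding complete_multipartite_def .
  have finV: "finite V" using G' by (rule conjunct1)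
  from G'[THEN conjunct2] obtain P where P: "finite P \<and> card P = k \<and> \<Union>P = V \<and> (\<forall>B\<in>P. B \<noteq> {}) \<and>
          (\<forall>B\<in>P. \<forall>C\<in>P. B \<noteq> C \<longrightarrow> B \<inter> C = {}) \<and>
          (\<forall>x\<in>V. \<forall>y\<in>V. E x y \<longleftrightarrow> \<not> (\<exists>B\<in>P. x \<in> B \<and> y \<in> B))" ..
  note PP = conjunct1[OF P] conjunct1[OF conjunct2[OF P]] conjunct1[OF conjunct2[OF conjunct2[OF P]]]
    conjunct1[OF conjunct2[OF conjunct2[OF conjunct2[OF P]]]]
    conjunct1[OF conjunct2[OF conjunct2[OF conjunct2[OF conjunct2[OF P]]]]]
    conjunct2[OF conjunct2[OF conjunct2[OF conjunct2[OF conjunct2[OF P]]]]]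
  have Pfin: "finite P" by (rule PP(1))
  have Pk: "card P = k" by (rule PP(2))
  have PV: "\<Union>P = V" by (rule PP(3))
  have Pne: "\<forall>B\<in>P. B \<noteq> {}" by (rule PP(4))
  have Pdisj: "\<forall>B\<in>P. \<forall>C\<in>P. B \<noteq> C \<longrightarrow> B \<inter> C = {}" by (rule PP(5))
  have PE: "\<forall>x\<in>V. \<forall>y\<in>V. E x y \<longleftrightarrow> \<not> (\<exists>B\<in>P. x \<in> B \<and> y \<in> B)" by (rule PP(6))
  define m where "m = nat \<lceil>real (n + k - 1) / 3\<rceil>"
  have m3: "n + k - 1 \<le> 3 * m"
  proof -
    have "real (n + k - 1) / 3 \<le> of_int \<lceil>real (n + k - 1) / 3\<rceil>" by (rule le_of_int_ceiling)
    moreover have "\<lceil>real (n + k - 1) / 3\<rceil> \<ge> 0" by simp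
    ultimately have "real (n + k - 1) / 3 \<le> real m" unfolding m_def by simp
    then show ?thesis by linarith
  qed
  have mk: "k + 1 \<le> m"
  proof -
    have "real k < real (n + k - 1) / 3" using n by auto
    also have "\<dots> \<le> of_int \<lceil>real (n + k - 1) / 3\<rceil>" by (rule le_of_int_ceiling)
    finally have "int k < \<lceil>real (n + k - 1) / 3\<rceil>" by linarith
    then show ?thesis unfolding m_def by linarith
  qed
  have Lfin: "\<forall>x\<in>V. finite (L x) \<and> card (L x) \<ge> m"
  proof
    fix x assume "x \<in> V"
    then have "card (L x) \<ge> m" using lists m_def by simp
    moreover have "card (L x) > 0" using \<open>card (L x) \<ge> m\<close> mk by linarith
    ultimately show "finite (L x) \<and> card (L x) \<ge> m" using card_ge_0_finite by blast
  qed
  have blkV: "\<And>B. B \<in> P \<Longrightarrow> B \<subseteq> V" using PV by blast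
  have PE': "E x y \<longleftrightarrow> \<not> (\<exists>B\<in>P. x \<in> B \<and> y \<in> B)" if "x \<in> V" "y \<in> V" for x y
    using PE that by simp
  have sameblock: "\<not> E x y" if "B \<in> P" "x \<in> B" "y \<in> B" for B x y
  proof -
    have "x \<in> V" "y \<in> V" using that blkV by auto
    then show ?thesis using PE' that by auto
  qed
  have Esym: "\<forall>x\<in>V. \<forall>y\<in>V. E x y \<longrightarrow> E y x"
  proof (intro ballI impI)
    fix x y assume "x \<in> V" "y \<in> V" "E x y"
    then show "E y x" using PE'[of x y] PE'[of y x] by auto
  qed
  have Eirr: "\<forall>x\<in>V. \<not> E x x"
  proof
    fix x assume "x \<in> V"
    then obtain B where "B \<in> P" "x \<in> B" using PV by blast
    then show "\<not> E x x" using sameblock by blast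
  qed
  have part_P: "B \<in> P" if B: "is_part V E B" for B
  proof -
    have stB: "stable_set V E B" and maxB: "\<forall>S. stable_set V E S \<and> B \<subseteq> S \<longrightarrow> S = B"
      using B unfolding is_part_def by auto
    have "B \<noteq> {}"
    proof
      assume "B = {}"
      have "P \<noteq> {}" using Pk k by auto
      then obtain C where C: "C \<in> P" by blast
      have "stable_set V E C" unfolding stable_set_def using C blkV sameblock by blast
      then have "C = B" using maxB \<open>B = {}\<close> by blast
      then show False using Pne C \<open>B = {}\<close> by blast
    qed
    then obtain x where x: "x \<in> B" by blast
    have "x \<in> V" using stB x unfolding stable_set_def by blast
    then obtain C where C: "C \<in> P" "x \<in> C" using PV by blast
    have "B \<subseteq> C"
    proof
      fix y assume y: "y \<in> B"
      have yV: "y \<in> V" using stB y unfolding stable_set_def by blast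
      have "\<not> E x y" using stB x y unfolding stable_set_def by blast
      then obtain D where D: "D \<in> P" "x \<in> D" "y \<in> D" using PE \<open>x \<in> V\<close> yV by blast
      then have "D = C" using C Pdisj by blast
      then show "y \<in> C" using D by blast
    qed
    moreover have "stable_set V E C" unfolding stable_set_def using C blkV sameblock by blast
    ultimately have "C = B" using maxB by blast
    then show ?thesis using C by simp
  qed
  have AP: "A \<in> P" using part_P A by blast
  have finA: "finite A" using AP blkV finV finite_subset by blast
  have X: "card {x\<in>B. c \<in> L x} \<le> 2" if B: "B \<in> P" for B c
  proof (rule ccontr)
    assume "\<not> card {x\<in>B. c \<in> L x} \<le> 2"
    then have "3 \<le> card {x\<in>B. c \<in> L x}" by simp
    then obtain S where S: "S \<subseteq> {x\<in>B. c \<in> L x}" "card S = 3" "finite S"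
      using obtain_subset_with_card_n by blast
    have SV: "S \<subseteq> V" using S blkV B by blast
    define V' where "V' = V - S"
    have finV': "finite V'" using finV V'_def by simp
    have cardV': "card V' = n - 3" using V'_def SV S cardV finV by (simp add: card_Diff_subset)
    obtain h :: "'a \<Rightarrow> nat" and N where h: "h ` V' = {i. i < N}" "inj_on h V'"
      using finite_imp_inj_to_nat_seg[OF finV'] by blast
    define W where "W = h ` V'"
    define F where "F = (\<lambda>i j. \<exists>x\<in>V'. \<exists>y\<in>V'. h x = i \<and> h y = j \<and> E x y)"
    have finW: "finite W" using W_def finV' by simp
    have cardW: "card W = n - 3" using W_def cardV' h(2) card_image by metis
    have Firr: "\<forall>x\<in>W. \<not> F x x"
      using Eirr h(2) unfolding F_def V'_def by (metis DiffD1 inj_on_eq_iff)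
    have sg: "simple_graph W F"
      unfolding simple_graph_def using finW Firr unfolding F_def V'_def using Esym by blast
    have "card W < n" using cardW n by simp
    with minimal sg have minW: "int (choice_number W F) \<le> max (int (chromatic_number W F))
            \<lceil>(real (card W) + real (chromatic_number W F) - 1) / 3\<rceil>" by blast
    obtain \<beta> :: "'a set \<Rightarrow> nat" and K where \<beta>: "\<beta> ` P = {i. i < K}" "inj_on \<beta> P"
      using finite_imp_inj_to_nat_seg[OF Pfin] by blast
    have "K = k" using \<beta> Pk card_image by (metis card_Collect_less_nat)
    define blk where "blk x = (THE B. B \<in> P \<and> x \<in> B)" for x
    have blk: "blk x \<in> P \<and> x \<in> blk x" if xV: "x \<in> V" for x
    proof -
      obtain B where "B \<in> P" "x \<in> B" using xV PV by blast
      then have "\<exists>!B. B \<in> P \<and> x \<in> B" using Pdisj by blast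
      then show ?thesis unfolding blk_def by (rule theI')
    qed
    define col where "col i = \<beta> (blk (inv_into V' h i))" for i
    have "proper_coloring W F col \<and> col ` W \<subseteq> {..<k}"
    proof
      show "proper_coloring W F col"
        unfolding proper_coloring_def
      proof (intro ballI impI)
        fix i j assume "i \<in> W" "j \<in> W" "F i j"
        then obtain x y where xy: "x \<in> V'" "y \<in> V'" "h x = i" "h y = j" "E x y" unfolding F_def by blast
        have ci: "col i = \<beta> (blk x)" unfolding col_def using xy(3)[symmetric] inv_into_f_f[OF h(2) xy(1)] by simp
        have cj: "col j = \<beta> (blk y)" unfolding col_def using xy(4)[symmetric] inv_into_f_f[OF h(2) xy(2)] by simp
        have xV: "x \<in> V" "y \<in> V" using xy V'_def by auto
        show "col i \<noteq> col j"
        proof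
          assume "col i = col j"
          then have "blk x = blk y" using ci cj \<beta>(2) blk xV inj_on_eq_iff by metis
          then show False using blk[OF xV(1)] blk[OF xV(2)] sameblock xy(5) by metis
        qed
      qed
    next
      show "col ` W \<subseteq> {..<k}"
      proof
        fix c assume "c \<in> col ` W"
        then obtain x where x: "x \<in> V'" "c = col (h x)" using W_def by blast
        then have "c = \<beta> (blk x)" using col_def inv_into_f_f[OF h(2)] by simp
        moreover have "blk x \<in> P" using blk x V'_def by blast
        ultimately show "c \<in> {..<k}" using \<beta>(1) \<open>K = k\<close> by blast
      qed
    qed
    then have "\<exists>f :: nat \<Rightarrow> nat. proper_coloring W F f \<and> f ` W \<subseteq> {..<k}" by blast
    then have chi: "chromatic_number W F \<le> k" unfolding chromatic_number_def by (rule Least_le)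
    have c1: "int (chromatic_number W F) \<le> int m - 1" using chi mk by linarith
    have "(real (card W) + real (chromatic_number W F) - 1) / 3 \<le> real_of_int (int m - 1)"
    proof -
      have "card W + chromatic_number W F + 2 \<le> 3 * m" using cardW chi m3 n by arith
      then have "real (card W + chromatic_number W F + 2) \<le> real (3 * m)" by (simp only: of_nat_le_iff)
      then have "real (card W) + real (chromatic_number W F) - 1 \<le> 3 * real m - 3" by simp
      then show ?thesis by simp
    qed
    then have c2: "\<lceil>(real (card W) + real (chromatic_number W F) - 1) / 3\<rceil> \<le> int m - 1"
      by (rule ceiling_le)
    have "int (choice_number W F) \<le> int m - 1" using minW c1 c2 by linarith
    then have "choice_number W F \<le> m - 1" by linarith
    then have chW: "choosable W F (m - 1)" using choosable_of_le[of W F, OF finW Firr] by blast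
    define L'' where "L'' x = L x - {c}" for x
    have l'': "\<forall>x\<in>V'. finite (L'' x) \<and> card (L'' x) \<ge> m - 1"
    proof
      fix x assume "x \<in> V'"
      then have "finite (L x) \<and> card (L x) \<ge> m" using Lfin V'_def by blast
      then show "finite (L'' x) \<and> card (L'' x) \<ge> m - 1" unfolding L''_def
        by (auto simp add: card_Diff_singleton_if)
    qed
    obtain f'' where f'': "L_coloring V' E L'' f''"
      using transfer_coloring[OF finV' h(2), of E "m - 1" L''] chW l'' unfolding W_def F_def by blast
    define f where "f x = (if x \<in> S then c else f'' x)" for x
    have "L_coloring V E L f"
      unfolding L_coloring_def proper_coloring_def
    proof (intro conjI ballI impI)
      fix x assume x: "x \<in> V"
      show "f x \<in> L x"
      proof (cases "x \<in> S")
        case True then show ?thesis using S f_def by auto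
      next
        case False then show ?thesis using f'' x V'_def L''_def f_def unfolding L_coloring_def by auto
      qed
    next
      fix x y assume x: "x \<in> V" and y: "y \<in> V" and e: "E x y"
      show "f x \<noteq> f y"
      proof (cases "x \<in> S")
        case True
        show ?thesis
        proof (cases "y \<in> S")
          case True
          then show ?thesis using \<open>x \<in> S\<close> S sameblock[OF B] e by blast
        next
          case False
          then have "f'' y \<in> L'' y" using f'' y V'_def unfolding L_coloring_def by auto
          then show ?thesis using False True f_def L''_def by auto
        qed
      next
        case False
        show ?thesis
        proof (cases "y \<in> S")
          case True
          have "f'' x \<in> L'' x" using f'' x False V'_def unfolding L_coloring_def by auto
          then show ?thesis using False True f_def L''_def by auto
        next
          case False
          then show ?thesis using \<open>x \<notin> S\<close> f'' x y e V'_def f_def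
            unfolding L_coloring_def proper_coloring_def by auto
        qed
      qed
    qed
    then show False using noncol by blast
  qed
  define U where "U = (\<Union>x\<in>V. L x)"
  have finU: "finite U" unfolding U_def by (rule finite_UN_I[OF finV]) (use Lfin in blast)
  have cardU: "card U \<le> n - 1" unfolding U_def using colors .
  have LU: "\<forall>v\<in>V. L v \<subseteq> U" unfolding U_def by blast
  have cntV: "card {v\<in>V. c \<in> L v} \<le> 2 * k" for c
  proof -
    have "{v\<in>V. c \<in> L v} = (\<Union>B\<in>P. {v\<in>B. c \<in> L v})" using PV by auto
    then have "card {v\<in>V. c \<in> L v} \<le> (\<Sum>B\<in>P. card {v\<in>B. c \<in> L v})"
      using card_UN_le[OF Pfin, of "\<lambda>B. {v\<in>B. c \<in> L v}"] by simp
    also have "\<dots> \<le> (\<Sum>B\<in>P. 2)" by (rule sum_mono) (rule X)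
    also have "\<dots> = 2 * k" using Pk by simp
    finally show ?thesis .
  qed
  have glob: "n * m \<le> (n - 1) * (2 * k)"
  proof -
    have "n * m \<le> (\<Sum>v\<in>V. card (L v))"
      using sum_bounded_below[of V m "\<lambda>v. card (L v)"] Lfin cardV by simp
    also have "\<dots> = (\<Sum>c\<in>U. card {v\<in>V. c \<in> L v})" by (rule double_count[OF finV finU LU])
    also have "\<dots> \<le> (\<Sum>c\<in>U. 2 * k)" by (rule sum_mono) (rule cntV)
    also have "\<dots> = card U * (2 * k)" by simp
    also have "\<dots> \<le> (n - 1) * (2 * k)" using cardU by (rule mult_le_mono1)
    finally show ?thesis .
  qed
  have AV: "A \<subseteq> V" using AP blkV by blast
  have locA: "card A * m \<le> 2 * (n - 1)"
  proof -
    have LUA: "\<forall>v\<in>A. L v \<subseteq> U" using LU AV by blast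
    have "card A * m \<le> (\<Sum>v\<in>A. card (L v))"
      using sum_bounded_below[of A m "\<lambda>v. card (L v)"] Lfin AV by auto
    also have "\<dots> = (\<Sum>c\<in>U. card {v\<in>A. c \<in> L v})" by (rule double_count[OF finA finU LUA])
    also have "\<dots> \<le> (\<Sum>c\<in>U. 2)" by (rule sum_mono) (rule X[OF AP])
    also have "\<dots> = card U * 2" by simp
    also have "\<dots> \<le> 2 * (n - 1)" using cardU by simp
    finally show ?thesis .
  qed
  have mlt: "m < 2 * k"
  proof (rule ccontr)
    assume "\<not> m < 2 * k"
    then have "n * (2 * k) \<le> n * m" by simp
    with glob have "n * (2 * k) \<le> (n - 1) * (2 * k)" by linarith
    then have "n \<le> n - 1" using k by simp
    then show False using n by simp
  qed
  have A4: "card A \<le> 4"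
  proof (rule ccontr)
    assume "\<not> card A \<le> 4"
    then have "5 * m \<le> card A * m" by simp
    with locA have "5 * m \<le> 2 * (n - 1)" by linarith
    with m3 mlt k n show False by arith
  qed
  have kk: "num_parts_of_size V E 1 + num_parts_of_size V E 4 + 1 \<le> k" if A3': "card A = 3"
  proof -
    define S1 where "S1 = {B. is_part V E B \<and> card B = 1}"
    define S4 where "S4 = {B. is_part V E B \<and> card B = 4}"
    have sub: "S1 \<union> S4 \<subseteq> P - {A}" unfolding S1_def S4_def using part_P A3' by auto
    have fin: "finite (P - {A})" using Pfin by simp
    have f1: "finite S1" "finite S4" using finite_subset[OF sub fin] by auto
    have dis: "S1 \<inter> S4 = {}" unfolding S1_def S4_def by auto
    have "card S1 + card S4 = card (S1 \<union> S4)" using card_Un_disjoint[OF f1 dis] by simp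
    also have "\<dots> \<le> card (P - {A})" by (rule card_mono[OF fin sub])
    also have "\<dots> = k - 1" using AP Pk Pfin by simp
    finally show ?thesis unfolding num_parts_of_size_def S1_def[symmetric] S4_def[symmetric] using k by linarith
  qed
  have "card A = 3 \<or> card A = 4" using A3 A4 by linarith
  then show ?thesis
  proof
    assume A3': "card A = 3"
    have "\<exists>x y z. A = {x, y, z} \<and> x \<noteq> y \<and> y \<noteq> z \<and> x \<noteq> z"
      using card_3_iff[THEN iffD1, OF A3'] .
    then obtain x y z where xyz: "A = {x, y, z}" "x \<noteq> y" "y \<noteq> z" "x \<noteq> z" by blast
    have xA: "x \<in> A" "y \<in> A" "z \<in> A" using xyz(1) by auto
    have xV: "x \<in> V" "y \<in> V" "z \<in> V" using AV xA by auto
    have fx: "finite (L x)" "finite (L y)" "finite (L z)" using Lfin xV by auto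
    have cx: "card (L x) \<ge> m" "card (L y) \<ge> m" "card (L z) \<ge> m" using Lfin xV by auto
    have "L x \<union> L y \<union> L z \<subseteq> U" using LU xV by auto
    then have "card (L x \<union> L y \<union> L z) \<le> card U" by (rule card_mono[OF finU])
    then have cu: "card (L x \<union> L y \<union> L z) \<le> n - 1" using cardU by linarith
    have q1: "card (L x \<inter> L y) \<le> card (L u \<inter> L v)" using maxpair xA xyz(2,3,4) by simp
    have q2: "card (L x \<inter> L z) \<le> card (L u \<inter> L v)" using maxpair xA xyz(2,3,4) by simp
    have q3: "card (L y \<inter> L z) \<le> card (L u \<inter> L v)" using maxpair xA xyz(2,3,4) by simp
    have ts: "card (L x) + card (L y) + card (L z) \<le> card (L x \<union> L y \<union> L z) + card (L x \<inter> L y) + card (L x \<inter> L z) + card (L y \<inter> L z)"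
      by (rule three_sets[OF fx])
    have "num_parts_of_size V E 1 + num_parts_of_size V E 4 + 1 \<le> 3 * card (L u \<inter> L v)"
      using kk[OF A3'] ts cx cu q1 q2 q3 m3 n by linarith
    then have "real (num_parts_of_size V E 1 + num_parts_of_size V E 4 + 1) \<le> real (3 * card (L u \<inter> L v))"
      by (simp only: of_nat_le_iff)
    then have "(real (num_parts_of_size V E 1) + real (num_parts_of_size V E 4) + 1) / 3 \<le> real (card (L u \<inter> L v))"
      by simp
    then show ?thesis unfolding good_pair_def using uv A3' by simp
  next
    assume A4': "card A = 4"
    have "\<forall>w z. A - {u, v} = {w, z} \<longrightarrow> card (L u \<inter> L v) \<ge> card (L w \<inter> L z)"
    proof (intro allI impI)
      fix w z assume wz: "A - {u, v} = {w, z}"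
      have sub: "{u, v} \<subseteq> A" using uv by auto
      have c2: "card {u, v} = 2" using uv(3) by simp
      have "card (A - {u, v}) = card A - card {u, v}" by (rule card_Diff_subset) (use sub in auto)
      then have cd: "card (A - {u, v}) = 2" using A4' c2 by simp
      have wzne: "w \<noteq> z"
      proof
        assume "w = z"
        then have "A - {u, v} = {w}" using wz by simp
        then have "card (A - {u, v}) = 1" by simp
        with cd show False by simp
      qed
      have "w \<in> A - {u, v}" "z \<in> A - {u, v}" using wz by auto
      then have wA: "w \<in> A" "z \<in> A" by auto
      show "card (L u \<inter> L v) \<ge> card (L w \<inter> L z)" using maxpair wA wzne by simp
    qed
    then show ?thesis unfolding good_pair_def using uv A4' by simp
  qed
qed
end
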